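(* Let $w$ be a Chebyshev weight, $n,\nu\in\mathbb N$, and let $Q$ be a trigonometric polynomial of degree at most $\nu$ that is even or odd. Let $t_k^n=t_k^n(w)$, $k=1,\dots,n$, be as in the context, set $t_0^n:=0$ and $\Delta t_k^n:=t_k^n-t_{k-1}^n$. Then $$\sum_{k=1}^n|Q(t_k^n)|\,\Delta t_k^n\le\Big(1+\frac{2\pi\nu}{n_w}\Big)\int_0^\pi|Q(\tau)|\,d\tau.$$
   Context: Chebyshev weights: $w_1(x)=(1-x^2)^{-1/2}$, $w_2(x)=(1-x^2)^{1/2}$, $w_3(x)=\sqrt{(1+x)/(1-x)}$, $w_4(x)=\sqrt{(1-x)/(1+x)}$. Angles: $t_k^n=\frac{(2k-1)\pi}{2n}$ ($w=w_1$), $\frac{k\pi}{n+1}$ ($w=w_2$), $\frac{(2k-1)\pi}{2n+1}$ ($w=w_3$), $\frac{2k\pi}{2n+1}$ ($w=w_4$), $k=1,\dots,n$. $n_w=n$ if $w=w_1$, $n_w=n+1$ if $w=w_2$, $n_w=\frac{2n+1}{2}$ if $w\in\{w_3,w_4\}$. *)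

theory Defs
  imports "HOL-Analysis.Analysis"
begin

datatype cheb_weight = W1 | W2 | W3 | W4

definition cheb_weight_fun :: "cheb_weight \<Rightarrow> real \<Rightarrow> real" where
  "cheb_weight_fun w x = (case w of
      W1 \<Rightarrow> 1 / sqrt (1 - x^2)
    | W2 \<Rightarrow> sqrt (1 - x^2)
    | W3 \<Rightarrow> sqrt ((1 + x) / (1 - x))
    | W4 \<Rightarrow> sqrt ((1 - x) / (1 + x)))"

definition cheb_angle :: "cheb_weight \<Rightarrow> nat \<Rightarrow> nat \<Rightarrow> real" where
  "cheb_angle w n k = (if k = 0 then 0 else (case w of
      W1 \<Rightarrow> (2 * real k - 1) * pi / (2 * real n)
    | W2 \<Rightarrow> real k * pi / (real n + 1)
    | W3 \<Rightarrow> (2 * real k - 1) * pi / (2 * real n + 1)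
    | W4 \<Rightarrow> 2 * real k * pi / (2 * real n + 1)))"

definition cheb_nw :: "cheb_weight \<Rightarrow> nat \<Rightarrow> real" where
  "cheb_nw w n = (case w of
      W1 \<Rightarrow> real n
    | W2 \<Rightarrow> real n + 1
    | W3 \<Rightarrow> (2 * real n + 1) / 2
    | W4 \<Rightarrow> (2 * real n + 1) / 2)"

definition trig_poly_deg_le :: "nat \<Rightarrow> (real \<Rightarrow> real) \<Rightarrow> bool" where
  "trig_poly_deg_le \<nu> Q \<longleftrightarrow> (\<exists>a b :: nat \<Rightarrow> real.
      \<forall>t. Q t = a 0 + (\<Sum>j=1..\<nu>. a j * cos (real j * t) + b j * sin (real j * t)))"

end

theory Submission
  imports Defs
begin


lemma cos_shift_2pik: "cos (x + 2 * pi * of_int k) = cos x" "sin (x + 2 * pi * of_int k) = sin x"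
  by (simp_all add: cos_add sin_add)

lemma int_sin:
  fixes k :: int and c :: real
  shows "((\<lambda>u. sin (of_int k * u + c)) has_integral (if k = 0 then 2 * pi * sin c else 0)) {-pi..pi}"
proof (cases "k = 0")
  case True
  then show ?thesis using has_integral_const_real[of "sin c" "-pi" pi] by simp
next
  case False
  have "((\<lambda>u. sin (of_int k * u + c)) has_integral
      ((- cos (of_int k * pi + c) / of_int k) - (- cos (of_int k * (-pi) + c) / of_int k))) {-pi..pi}"
    apply (rule fundamental_theorem_of_calculus)
    using False
    by (auto intro!: derivative_eq_intros simp: has_real_derivative_iff_has_vector_derivative[symmetric])
  moreover have "cos (of_int k * pi + c) = cos (of_int k * (-pi) + c)"
    using cos_shift_2pik(1)[of "of_int k * (-pi) + c" k] by (simp add: algebra_simps)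
  ultimately show ?thesis using False by simp
qed

lemma int_cos:
  fixes k :: int and c :: real
  shows "((\<lambda>u. cos (of_int k * u + c)) has_integral (if k = 0 then 2 * pi * cos c else 0)) {-pi..pi}"
proof (cases "k = 0")
  case True
  then show ?thesis using has_integral_const_real[of "cos c" "-pi" pi] by simp
next
  case False
  have "((\<lambda>u. cos (of_int k * u + c)) has_integral
      ((sin (of_int k * pi + c) / of_int k) - (sin (of_int k * (-pi) + c) / of_int k))) {-pi..pi}"
    apply (rule fundamental_theorem_of_calculus)
    using False
    by (auto intro!: derivative_eq_intros simp: has_real_derivative_iff_has_vector_derivative[symmetric])
  moreover have "sin (of_int k * pi + c) = sin (of_int k * (-pi) + c)"
    using cos_shift_2pik(2)[of "of_int k * (-pi) + c" k] by (simp add: algebra_simps)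
  ultimately show ?thesis using False by simp
qed


lemma prod_to_sum:
  "cos x * sin y = (sin (y + x) + sin (y - x)) / (2::real)"
  "sin x * sin y = (cos (y - x) - cos (y + x)) / (2::real)"
  by (simp_all add: sin_add sin_diff cos_add cos_diff algebra_simps)

lemma P_int:
  fixes a b :: "nat \<Rightarrow> real" and m :: int and c :: real
  assumes m: "m \<ge> 1"
  shows "((\<lambda>u. (a 0 + (\<Sum>j=1..\<nu>. a j * cos (real j * u) + b j * sin (real j * u))) * sin (of_int m * u - c))
     has_integral (pi * (\<Sum>j=1..\<nu>. if int j = m then b j * cos c - a j * sin c else 0))) {-pi..pi}"
proof -
  have e: "(a 0 + (\<Sum>j=1..\<nu>. a j * cos (real j * u) + b j * sin (real j * u))) * sin (of_int m * u - c)
    = a 0 * sin (of_int m * u + - c) + (\<Sum>j=1..\<nu>. a j / 2 * sin (of_int (m + int j) * u + -c)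
       + a j / 2 * sin (of_int (m - int j) * u + -c) + b j / 2 * cos (of_int (m - int j) * u + -c)
       - b j / 2 * cos (of_int (m + int j) * u + -c))" for u
  proof -
    have "(a j * cos (real j * u) + b j * sin (real j * u)) * sin (of_int m * u - c) =
       a j / 2 * sin (of_int (m + int j) * u + -c)
       + a j / 2 * sin (of_int (m - int j) * u + -c) + b j / 2 * cos (of_int (m - int j) * u + -c)
       - b j / 2 * cos (of_int (m + int j) * u + -c)" for j
    proof -
      have 1: "of_int (m + int j) * u + -c = (of_int m * u - c) + real j * u"
           "of_int (m - int j) * u + -c = (of_int m * u - c) - real j * u"
        by (simp_all add: algebra_simps)
      show ?thesis unfolding 1 distrib_right mult.assoc prod_to_sum by (simp add: diff_divide_distrib add_divide_distrib ring_distribs)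
    qed
    then show ?thesis by (simp add: distrib_right sum_distrib_right)
  qed
  have "((\<lambda>u. a 0 * sin (of_int m * u + - c) + (\<Sum>j=1..\<nu>. a j / 2 * sin (of_int (m + int j) * u + -c)
       + a j / 2 * sin (of_int (m - int j) * u + -c) + b j / 2 * cos (of_int (m - int j) * u + -c)
       - b j / 2 * cos (of_int (m + int j) * u + -c))) has_integral
     (a 0 * 0 + (\<Sum>j=1..\<nu>. a j / 2 * 0 + a j / 2 * (if int j = m then 2 * pi * sin (-c) else 0)
       + b j / 2 * (if int j = m then 2 * pi * cos (-c) else 0) - b j / 2 * 0))) {-pi..pi}"
  proof (rule has_integral_add)
    show "((\<lambda>u. a 0 * sin (of_int m * u + - c)) has_integral a 0 * 0) {-pi..pi}"
      using int_sin[of m "-c"] m by (intro has_integral_mult_right[where c="a 0"]) simp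
    show "((\<lambda>u. \<Sum>j=1..\<nu>. a j / 2 * sin (of_int (m + int j) * u + -c)
       + a j / 2 * sin (of_int (m - int j) * u + -c) + b j / 2 * cos (of_int (m - int j) * u + -c)
       - b j / 2 * cos (of_int (m + int j) * u + -c)) has_integral (\<Sum>j=1..\<nu>. a j / 2 * 0 + a j / 2 * (if int j = m then 2 * pi * sin (-c) else 0)
       + b j / 2 * (if int j = m then 2 * pi * cos (-c) else 0) - b j / 2 * 0)) {-pi..pi}"
    proof (rule has_integral_sum, simp)
      fix j assume "j \<in> {1..\<nu>}"
      have eqj: "(m = int j) = (int j = m)" by auto
      have i1: "((\<lambda>u. sin (of_int (m + int j) * u + -c)) has_integral 0) {-pi..pi}"
        using int_sin[of "m + int j" "-c"] m by simp
      have i2: "((\<lambda>u. sin (of_int (m - int j) * u + -c)) has_integral (if int j = m then 2 * pi * sin (-c) else 0)) {-pi..pi}"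
        using int_sin[of "m - int j" "-c"] m by (simp add: eqj)
      have i3: "((\<lambda>u. cos (of_int (m - int j) * u + -c)) has_integral (if int j = m then 2 * pi * cos (-c) else 0)) {-pi..pi}"
        using int_cos[of "m - int j" "-c"] m by (simp add: eqj)
      have i4: "((\<lambda>u. cos (of_int (m + int j) * u + -c)) has_integral 0) {-pi..pi}"
        using int_cos[of "m + int j" "-c"] m by simp
      show "((\<lambda>u. a j / 2 * sin (of_int (m + int j) * u + -c)
       + a j / 2 * sin (of_int (m - int j) * u + -c) + b j / 2 * cos (of_int (m - int j) * u + -c)
       - b j / 2 * cos (of_int (m + int j) * u + -c)) has_integral (a j / 2 * 0 + a j / 2 * (if int j = m then 2 * pi * sin (-c) else 0)
       + b j / 2 * (if int j = m then 2 * pi * cos (-c) else 0) - b j / 2 * 0)) {-pi..pi}"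
        by (rule has_integral_diff[OF has_integral_add[OF has_integral_add[OF has_integral_mult_right[OF i1] has_integral_mult_right[OF i2]] has_integral_mult_right[OF i3]] has_integral_mult_right[OF i4]])
    qed
  qed
  moreover have "(a 0 * 0 + (\<Sum>j=1..\<nu>. a j / 2 * 0 + a j / 2 * (if int j = m then 2 * pi * sin (-c) else 0)
       + b j / 2 * (if int j = m then 2 * pi * cos (-c) else 0) - b j / 2 * 0))
      = pi * (\<Sum>j=1..\<nu>. if int j = m then b j * cos c - a j * sin c else 0)"
    by (auto simp add: sum_distrib_left algebra_simps intro!: sum.cong)
  ultimately show ?thesis unfolding e by simp
qed


definition TP :: "(nat \<Rightarrow> real) \<Rightarrow> (nat \<Rightarrow> real) \<Rightarrow> nat \<Rightarrow> real \<Rightarrow> real" where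
  "TP a b \<nu> u = a 0 + (\<Sum>j=1..\<nu>. a j * cos (real j * u) + b j * sin (real j * u))"
definition TPd :: "(nat \<Rightarrow> real) \<Rightarrow> (nat \<Rightarrow> real) \<Rightarrow> nat \<Rightarrow> real \<Rightarrow> real" where
  "TPd a b \<nu> x = (\<Sum>j=1..\<nu>. real j * (b j * cos (real j * x) - a j * sin (real j * x)))"
definition Fk :: "nat \<Rightarrow> real \<Rightarrow> real" where
  "Fk \<nu> y = (\<Sum>p<\<nu>. \<Sum>q<\<nu>. cos ((real p - real q) * y))"
definition Kk :: "nat \<Rightarrow> real \<Rightarrow> real" where
  "Kk \<nu> y = sin (real \<nu> * y) * Fk \<nu> y"

lemma Fk_sq: "Fk \<nu> y = (\<Sum>p<\<nu>. cos (real p * y))^2 + (\<Sum>p<\<nu>. sin (real p * y))^2"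
  by (simp add: Fk_def power2_eq_square sum_product cos_diff left_diff_distrib sum.distrib[symmetric])

lemma Fk_nonneg: "Fk \<nu> y \<ge> 0"
  unfolding Fk_sq by simp

lemma cont_TP[continuous_intros]: "continuous_on S (TP a b \<nu>)"
  unfolding TP_def by (intro continuous_intros)
lemma cont_TPd[continuous_intros]: "continuous_on S (TPd a b \<nu>)"
  unfolding TPd_def by (intro continuous_intros)
lemma cont_Fk[continuous_intros]: "continuous_on S (Fk \<nu>)"
  unfolding Fk_def by (intro continuous_intros)
lemma cont_Kk[continuous_intros]: "continuous_on S (Kk \<nu>)"
  unfolding Kk_def by (intro continuous_intros)

lemma deriv_TP: "(TP a b \<nu> has_real_derivative TPd a b \<nu> x) (at x)"
proof -
  have "((\<lambda>u. a 0 + (\<Sum>j=1..\<nu>. a j * cos (real j * u) + b j * sin (real j * u))) has_real_derivative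
        0 + (\<Sum>j=1..\<nu>. a j * (- sin (real j * x) * (real j)) + b j * (cos (real j * x) * real j))) (at x)"
    by (rule DERIV_add[OF DERIV_const DERIV_sum]) (auto intro!: derivative_eq_intros)
  moreover have "0 + (\<Sum>j=1..\<nu>. a j * (- sin (real j * x) * (real j)) + b j * (cos (real j * x) * real j)) = TPd a b \<nu> x"
    unfolding TPd_def by (auto intro!: sum.cong simp: algebra_simps)
  ultimately show ?thesis unfolding TP_def[abs_def] by simp
qed

lemma Fk_int: "((\<lambda>x. Fk \<nu> (u - x)) has_integral (2 * pi * real \<nu>)) {-pi..pi}"
proof -
  have "((\<lambda>x. \<Sum>p<\<nu>. \<Sum>q<\<nu>. cos (of_int (int q - int p) * x + (real p - real q) * u))
      has_integral (\<Sum>p<\<nu>. \<Sum>q<\<nu>. if int q - int p = 0 then 2 * pi * cos ((real p - real q) * u) else 0)) {-pi..pi}"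
    by (intro has_integral_sum int_cos finite_lessThan)
  moreover have "(\<Sum>p<\<nu>. \<Sum>q<\<nu>. if int q - int p = 0 then 2 * pi * cos ((real p - real q) * u) else (0::real))
      = (\<Sum>p<\<nu>. \<Sum>q<\<nu>. if q = p then 2 * pi else 0)"
    by (intro sum.cong refl) auto
  moreover have "(\<Sum>p<\<nu>. \<Sum>q<\<nu>. if q = p then 2 * pi else (0::real)) = 2 * pi * real \<nu>"
    by simp
  moreover have "(\<lambda>x. \<Sum>p<\<nu>. \<Sum>q<\<nu>. cos (of_int (int q - int p) * x + (real p - real q) * u)) = (\<lambda>x. Fk \<nu> (u - x))"
    unfolding Fk_def by (intro ext sum.cong refl arg_cong[where f=cos]) (simp add: algebra_simps)
  ultimately show ?thesis by (simp add: algebra_simps)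
qed


lemma count1:
  assumes j: "1 \<le> j" "j \<le> \<nu>"
  shows "(\<Sum>p<\<nu>. \<Sum>q<\<nu>. if int j = int \<nu> + int p - int q then 1 else 0 :: real) = real j"
proof -
  have "(\<Sum>q<\<nu>. if int j = int \<nu> + int p - int q then 1 else 0 :: real) = (if p < j then 1 else 0)" for p
  proof -
    have "(\<Sum>q<\<nu>. if int j = int \<nu> + int p - int q then 1 else 0 :: real)
        = (\<Sum>q<\<nu>. if q = \<nu> + p - j then 1 else 0)"
      using j by (intro sum.cong refl) auto
    also have "\<dots> = (if \<nu> + p - j < \<nu> then 1 else 0)"
      by (simp add: sum.delta')
    also have "\<dots> = (if p < j then 1 else 0)" using j by auto
    finally show ?thesis .
  qed
  then have "(\<Sum>p<\<nu>. \<Sum>q<\<nu>. if int j = int \<nu> + int p - int q then 1 else 0 :: real)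
      = (\<Sum>p<\<nu>. if p < j then 1 else 0)" by simp
  also have "\<dots> = (\<Sum>p\<in>{..<j}. 1)"
    using j by (intro sum.mono_neutral_cong_right) auto
  finally show ?thesis by simp
qed

lemma count2:
  assumes j: "1 \<le> j" "j \<le> \<nu>"
  shows "(\<Sum>p<\<nu>. \<Sum>q<\<nu>. if int j = int \<nu> - int p + int q then 1 else 0 :: real) = real j"
proof -
  have "(\<Sum>p<\<nu>. \<Sum>q<\<nu>. if int j = int \<nu> - int p + int q then 1 else 0 :: real)
     = (\<Sum>q<\<nu>. \<Sum>p<\<nu>. if int j = int \<nu> + int q - int p then 1 else 0 :: real)"
    by (subst sum.swap) (intro sum.cong refl, auto)
  then show ?thesis using count1[OF j] by simp
qed

lemma sin_cos_prod: "sin A * cos B = (sin (A + B) + sin (A - B)) / (2::real)"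
  by (simp add: sin_add sin_diff)

lemma sum3_swap: "(\<Sum>p\<in>A. \<Sum>q\<in>B. \<Sum>j\<in>C. f p q j) = (\<Sum>j\<in>C. \<Sum>p\<in>A. \<Sum>q\<in>B. f p q j)"
proof -
  have "(\<Sum>p\<in>A. \<Sum>q\<in>B. \<Sum>j\<in>C. f p q j) = (\<Sum>p\<in>A. \<Sum>j\<in>C. \<Sum>q\<in>B. f p q j)"
    by (intro sum.cong refl sum.swap)
  also have "\<dots> = (\<Sum>j\<in>C. \<Sum>p\<in>A. \<Sum>q\<in>B. f p q j)" by (rule sum.swap)
  finally show ?thesis .
qed

lemma repro:
  "((\<lambda>u. TP a b \<nu> u * Kk \<nu> (u - x)) has_integral pi * TPd a b \<nu> x) {-pi..pi}"
proof -
  define T where "T j = b j * cos (real j * x) - a j * sin (real j * x)" for j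
  define m1 where "m1 p q = int \<nu> + int p - int q" for p q
  define m2 where "m2 p q = int \<nu> - int p + int q" for p q
  have e: "TP a b \<nu> u * Kk \<nu> (u - x) = (\<Sum>p<\<nu>. \<Sum>q<\<nu>.
      TP a b \<nu> u * sin (of_int (m1 p q) * u - of_int (m1 p q) * x) / 2 +
      TP a b \<nu> u * sin (of_int (m2 p q) * u - of_int (m2 p q) * x) / 2)" for u
  proof -
    have "sin (real \<nu> * (u - x)) * cos ((real p - real q) * (u - x)) =
      (sin (of_int (m1 p q) * u - of_int (m1 p q) * x) + sin (of_int (m2 p q) * u - of_int (m2 p q) * x)) / 2" for p q
      unfolding sin_cos_prod m1_def m2_def by (simp add: algebra_simps)
    then show ?thesis
      unfolding Kk_def Fk_def sum_distrib_left
      by (simp add: add_divide_distrib ring_distribs)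
  qed
  have pi_m: "((\<lambda>u. TP a b \<nu> u * sin (of_int m * u - of_int m * x)) has_integral
       pi * (\<Sum>j=1..\<nu>. T j * (if int j = m then 1 else 0))) {-pi..pi}" if "m \<ge> 1" for m
  proof -
    have "(\<Sum>j=1..\<nu>. if int j = m then b j * cos (of_int m * x) - a j * sin (of_int m * x) else 0)
       = (\<Sum>j=1..\<nu>. T j * (if int j = m then 1 else 0))"
      unfolding T_def by (intro sum.cong refl) auto
    then show ?thesis using P_int[OF that, where a=a and b=b and \<nu>=\<nu> and c="of_int m * x"] unfolding TP_def[abs_def] by simp
  qed
  have m1: "m1 p q \<ge> 1" "m2 p q \<ge> 1" if "p < \<nu>" "q < \<nu>" for p q
    using that unfolding m1_def m2_def by auto
  have "((\<lambda>u. \<Sum>p<\<nu>. \<Sum>q<\<nu>.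
      TP a b \<nu> u * sin (of_int (m1 p q) * u - of_int (m1 p q) * x) / 2 +
      TP a b \<nu> u * sin (of_int (m2 p q) * u - of_int (m2 p q) * x) / 2) has_integral
      (\<Sum>p<\<nu>. \<Sum>q<\<nu>. pi * (\<Sum>j=1..\<nu>. T j * (if int j = m1 p q then 1 else 0)) / 2
          + pi * (\<Sum>j=1..\<nu>. T j * (if int j = m2 p q then 1 else 0)) / 2)) {-pi..pi}"
    by (intro has_integral_sum finite_lessThan has_integral_add has_integral_divide pi_m m1) auto
  moreover have "(\<Sum>p<\<nu>. \<Sum>q<\<nu>. pi * (\<Sum>j=1..\<nu>. T j * (if int j = m1 p q then 1 else 0)) / 2
          + pi * (\<Sum>j=1..\<nu>. T j * (if int j = m2 p q then 1 else 0)) / 2)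
      = pi / 2 * (\<Sum>j=1..\<nu>. T j * ((\<Sum>p<\<nu>. \<Sum>q<\<nu>. if int j = m1 p q then 1 else 0)
          + (\<Sum>p<\<nu>. \<Sum>q<\<nu>. if int j = m2 p q then 1 else 0)))"
  proof -
    have "pi * (\<Sum>j=1..\<nu>. T j * (if int j = m1 p q then 1 else 0)) / 2
          + pi * (\<Sum>j=1..\<nu>. T j * (if int j = m2 p q then 1 else 0)) / 2
        = pi / 2 * (\<Sum>j=1..\<nu>. T j * ((if int j = m1 p q then 1 else 0) + (if int j = m2 p q then 1 else 0)))" for p q
      by (simp add: sum.distrib ring_distribs)
    then have "(\<Sum>p<\<nu>. \<Sum>q<\<nu>. pi * (\<Sum>j=1..\<nu>. T j * (if int j = m1 p q then 1 else 0)) / 2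
          + pi * (\<Sum>j=1..\<nu>. T j * (if int j = m2 p q then 1 else 0)) / 2)
        = pi / 2 * (\<Sum>p<\<nu>. \<Sum>q<\<nu>. \<Sum>j=1..\<nu>. T j * ((if int j = m1 p q then 1 else 0) + (if int j = m2 p q then 1 else 0)))"
      by (simp add: sum_distrib_left)
    also have "\<dots> = pi / 2 * (\<Sum>j=1..\<nu>. \<Sum>p<\<nu>. \<Sum>q<\<nu>. T j * ((if int j = m1 p q then 1 else 0) + (if int j = m2 p q then 1 else 0)))"
      by (subst sum3_swap) (rule refl)
    also have "\<dots> = pi / 2 * (\<Sum>j=1..\<nu>. T j * ((\<Sum>p<\<nu>. \<Sum>q<\<nu>. if int j = m1 p q then 1 else 0)
          + (\<Sum>p<\<nu>. \<Sum>q<\<nu>. if int j = m2 p q then 1 else 0)))"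
      by (intro arg_cong[where f="\<lambda>z. pi/2 * z"] sum.cong refl) (simp only: distrib_left sum_distrib_left sum.distrib)
    finally show ?thesis .
  qed
  moreover have "\<dots> = pi * TPd a b \<nu> x"
    unfolding TPd_def sum_distrib_left
    by (intro sum.cong refl) (auto simp: m1_def m2_def count1 count2 T_def)
  ultimately show ?thesis unfolding e by simp
qed


lemma cont_TP'[continuous_intros]: "continuous_on S f \<Longrightarrow> continuous_on S (\<lambda>x. TP a b \<nu> (f x))"
  by (rule continuous_on_compose2[OF cont_TP]) auto
lemma cont_TPd'[continuous_intros]: "continuous_on S f \<Longrightarrow> continuous_on S (\<lambda>x. TPd a b \<nu> (f x))"
  by (rule continuous_on_compose2[OF cont_TPd]) auto
lemma cont_Fk'[continuous_intros]: "continuous_on S f \<Longrightarrow> continuous_on S (\<lambda>x. Fk \<nu> (f x))"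
  by (rule continuous_on_compose2[OF cont_Fk]) auto
lemma cont_Kk'[continuous_intros]: "continuous_on S f \<Longrightarrow> continuous_on S (\<lambda>x. Kk \<nu> (f x))"
  by (rule continuous_on_compose2[OF cont_Kk]) auto

lemma bern:
  "integral {-pi..pi} (\<lambda>x. \<bar>TPd a b \<nu> x\<bar>) \<le> 2 * real \<nu> * integral {-pi..pi} (\<lambda>u. \<bar>TP a b \<nu> u\<bar>)"
proof -
  define G where "G x = integral {-pi..pi} (\<lambda>u. \<bar>TP a b \<nu> u\<bar> * Fk \<nu> (u - x))" for x
  have pt: "pi * \<bar>TPd a b \<nu> x\<bar> \<le> G x" for x
  proof -
    have "pi * \<bar>TPd a b \<nu> x\<bar> = norm (integral {-pi..pi} (\<lambda>u. TP a b \<nu> u * Kk \<nu> (u - x)))"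
      using repro[of a b \<nu> x] by (simp add: integral_unique abs_mult)
    also have "\<dots> \<le> G x"
      unfolding G_def
    proof (rule integral_norm_bound_integral)
      show "(\<lambda>u. TP a b \<nu> u * Kk \<nu> (u - x)) integrable_on {-pi..pi}"
        by (intro integrable_continuous_interval continuous_intros)
      show "(\<lambda>u. \<bar>TP a b \<nu> u\<bar> * Fk \<nu> (u - x)) integrable_on {-pi..pi}"
        by (intro integrable_continuous_interval continuous_intros)
      fix u
      have "\<bar>sin (real \<nu> * (u - x))\<bar> * Fk \<nu> (u - x) \<le> 1 * Fk \<nu> (u - x)"
        using Fk_nonneg by (intro mult_right_mono) auto
      then show "norm (TP a b \<nu> u * Kk \<nu> (u - x)) \<le> \<bar>TP a b \<nu> u\<bar> * Fk \<nu> (u - x)"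
        unfolding Kk_def using Fk_nonneg[of \<nu> "u - x"]
        by (auto simp: abs_mult intro!: mult_left_mono)
    qed
    finally show ?thesis .
  qed
  have contG: "continuous_on {-pi..pi} G"
    unfolding G_def box_real(2)[symmetric]
    by (rule integral_continuous_on_param) (auto simp: split_beta intro!: continuous_intros)
  have "integral {-pi..pi} (\<lambda>x. pi * \<bar>TPd a b \<nu> x\<bar>) \<le> integral {-pi..pi} G"
    by (rule integral_le) (auto intro!: integrable_continuous_interval continuous_intros contG pt)
  also have "integral {-pi..pi} G = integral {-pi..pi} (\<lambda>u. integral {-pi..pi} (\<lambda>x. \<bar>TP a b \<nu> u\<bar> * Fk \<nu> (u - x)))"
    unfolding G_def box_real(2)[symmetric]
    by (rule integral_swap_continuous) (auto simp: split_beta intro!: continuous_intros)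
  also have "\<dots> = integral {-pi..pi} (\<lambda>u. \<bar>TP a b \<nu> u\<bar> * (2 * pi * real \<nu>))"
    by (intro integral_cong integral_unique has_integral_mult_right Fk_int)
  also have "\<dots> = pi * (2 * real \<nu> * integral {-pi..pi} (\<lambda>u. \<bar>TP a b \<nu> u\<bar>))"
    by (simp add: algebra_simps)
  finally have "pi * integral {-pi..pi} (\<lambda>x. \<bar>TPd a b \<nu> x\<bar>) \<le> pi * (2 * real \<nu> * integral {-pi..pi} (\<lambda>u. \<bar>TP a b \<nu> u\<bar>))"
    by simp
  then show ?thesis by simp
qed

lemma even_int:
  fixes f :: "real \<Rightarrow> real"
  assumes "continuous_on {-pi..pi} f" "\<And>x. f (-x) = f x"
  shows "integral {-pi..pi} f = 2 * integral {0..pi} f"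
proof -
  have "integral {-pi..0} f + integral {0..pi} f = integral {-pi..pi} f"
    by (rule Henstock_Kurzweil_Integration.integral_combine) (auto intro!: integrable_continuous_interval assms)
  moreover have "integral {-pi..-0} (\<lambda>x. f (-x)) = integral {0..pi} f"
    by (rule Henstock_Kurzweil_Integration.integral_reflect_real)
  ultimately show ?thesis using assms(2) by simp
qed


lemma frac_pi: "0 < D \<Longrightarrow> \<alpha> \<le> D \<Longrightarrow> \<alpha> * pi / D \<le> pi"
  using mult_right_mono[of \<alpha> D pi] pi_gt_zero by (simp add: pos_divide_le_eq)
lemma frac_nonneg: "0 \<le> \<alpha> \<Longrightarrow> 0 \<le> D \<Longrightarrow> 0 \<le> \<alpha> * pi / (D::real)"
  by simp

lemma angle_facts:
  assumes "n \<ge> 1" "1 \<le> k" "k \<le> n"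
  shows "0 \<le> cheb_angle w n (k-1) \<and> cheb_angle w n (k-1) \<le> cheb_angle w n k
    \<and> cheb_angle w n k - cheb_angle w n (k-1) \<le> pi / cheb_nw w n \<and> cheb_angle w n k \<le> pi"
proof -
  have kn: "real k \<le> real n" "1 \<le> real k" using assms by auto
  have up: "cheb_angle w n k \<le> pi"
    using assms kn by (cases w) (auto simp: cheb_angle_def intro!: frac_pi)
  have nwpos: "cheb_nw w n > 0" using assms by (cases w) (auto simp: cheb_nw_def)
  show ?thesis
  proof (cases "k = 1")
    case True
    have "cheb_angle w n 1 \<le> pi / cheb_nw w n"
      using assms pi_gt_zero by (cases w) (auto simp: cheb_angle_def cheb_nw_def frac_le)
    moreover have "0 \<le> cheb_angle w n 1"
      using assms by (cases w) (auto simp: cheb_angle_def)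
    ultimately show ?thesis using True up by (simp add: cheb_angle_def)
  next
    case False
    then have k2: "k \<ge> 2" using assms by auto
    then have rk: "real (k - 1) = real k - 1" by (simp add: of_nat_diff)
    have d: "cheb_angle w n k - cheb_angle w n (k-1) = pi / cheb_nw w n"
    proof -
      have "real n + 1 \<noteq> 0" "2 * real n + 1 \<noteq> 0" "real n \<noteq> 0" using assms by auto
      then show ?thesis
        using k2 assms by (cases w) (simp_all add: cheb_angle_def cheb_nw_def rk diff_divide_distrib[symmetric] algebra_simps)
    qed
    have nn: "0 \<le> cheb_angle w n (k-1)"
      using k2 kn by (cases w) (auto simp: cheb_angle_def rk intro!: frac_nonneg)
    show ?thesis using d nn up nwpos pi_gt_zero
      by (smt (verit) divide_pos_pos)
  qed
qed


lemma tele: "(\<Sum>k=1..n. (G k - G (k - 1))) = G n - (G 0 :: real)" for n :: nat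
  by (induction n) (auto simp: sum.cl_ivl_Suc)

lemma int_diff0:
  fixes \<phi> :: "real \<Rightarrow> real"
  assumes "continuous_on UNIV \<phi>" "0 \<le> a" "a \<le> c"
  shows "integral {0..c} \<phi> - integral {0..a} \<phi> = integral {a..c} \<phi>"
proof -
  have "\<phi> integrable_on {0..c}"
    by (rule integrable_continuous_interval, rule continuous_on_subset[OF assms(1)]) auto
  then show ?thesis using Henstock_Kurzweil_Integration.integral_combine[of 0 a c \<phi>] assms by simp
qed

lemma step_bound:
  fixes f f' :: "real \<Rightarrow> real"
  assumes deriv: "\<And>x. (f has_real_derivative f' x) (at x)"
    and cf: "continuous_on UNIV f" and cf': "continuous_on UNIV f'"
    and ac: "0 \<le> a" "a \<le> c" "c - a \<le> \<delta>"
  shows "(c - a) * \<bar>f c\<bar> \<le> (integral {0..c} (\<lambda>t. \<bar>f t\<bar>) - integral {0..a} (\<lambda>t. \<bar>f t\<bar>))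
     + \<delta> * (integral {0..c} (\<lambda>t. \<bar>f' t\<bar>) - integral {0..a} (\<lambda>t. \<bar>f' t\<bar>))"
proof -
  have caf: "continuous_on UNIV (\<lambda>t. \<bar>f t\<bar>)" "continuous_on UNIV (\<lambda>t. \<bar>f' t\<bar>)"
    using cf cf' by (auto intro!: continuous_intros)
  define H where "H = integral {a..c} (\<lambda>t. \<bar>f' t\<bar>)"
  have intg: "g integrable_on {x..y}" if "continuous_on UNIV g" for g :: "real \<Rightarrow> real" and x y
    by (rule integrable_continuous_interval, rule continuous_on_subset[OF that]) auto
  have H0: "0 \<le> H" unfolding H_def by (rule integral_nonneg) (auto intro: intg caf)
  have pt: "\<bar>f c\<bar> \<le> \<bar>f s\<bar> + H" if s: "s \<in> {a..c}" for s
  proof -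
    have "(f' has_integral (f c - f s)) {s..c}"
      using s by (intro fundamental_theorem_of_calculus)
        (auto intro!: has_field_derivative_at_within deriv simp: has_real_derivative_iff_has_vector_derivative[symmetric])
    then have "\<bar>f c - f s\<bar> = norm (integral {s..c} f')" by (simp add: integral_unique)
    also have "\<dots> \<le> integral {s..c} (\<lambda>t. \<bar>f' t\<bar>)"
      by (rule integral_norm_bound_integral) (auto intro: intg cf' caf)
    also have "\<dots> \<le> H"
      unfolding H_def using s by (intro integral_subset_le) (auto intro: intg caf)
    finally show ?thesis by linarith
  qed
  have "(c - a) * \<bar>f c\<bar> = integral {a..c} (\<lambda>s. \<bar>f c\<bar>)" using ac by simp
  also have "\<dots> \<le> integral {a..c} (\<lambda>s. \<bar>f s\<bar> + H)"
    by (rule integral_le) (auto intro!: intg pt continuous_intros caf)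
  also have "\<dots> = integral {a..c} (\<lambda>s. \<bar>f s\<bar>) + (c - a) * H"
    using ac by (subst integral_add) (auto intro: intg caf)
  also have "\<dots> \<le> integral {a..c} (\<lambda>s. \<bar>f s\<bar>) + \<delta> * H"
    using ac H0 by (simp add: mult_right_mono)
  finally show ?thesis
    unfolding H_def using int_diff0[OF caf(1) ac(1,2)] int_diff0[OF caf(2) ac(1,2)] by simp
qed


theorem lemma6p2:
  fixes w :: cheb_weight and n \<nu> :: nat and Q :: "real \<Rightarrow> real"
  assumes "n \<ge> 1"
    and "trig_poly_deg_le \<nu> Q"
    and "(\<forall>t. Q (- t) = Q t) \<or> (\<forall>t. Q (- t) = - Q t)"
  shows "(\<Sum>k=1..n. \<bar>Q (cheb_angle w n k)\<bar> * (cheb_angle w n k - cheb_angle w n (k - 1)))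
         \<le> (1 + 2 * pi * real \<nu> / cheb_nw w n) * integral {0..pi} (\<lambda>\<tau>. \<bar>Q \<tau>\<bar>)"
proof -
  obtain a b where ab: "\<forall>t. Q t = a 0 + (\<Sum>j=1..\<nu>. a j * cos (real j * t) + b j * sin (real j * t))"
    using assms(2) unfolding trig_poly_deg_le_def by blast
  have Qeq: "Q = TP a b \<nu>" using ab by (auto simp: TP_def)
  define Qd where "Qd = TPd a b \<nu>"
  have dQ: "\<And>x. (Q has_real_derivative Qd x) (at x)" using deriv_TP Qeq Qd_def by simp
  have cQ: "continuous_on S Q" for S unfolding Qeq by (rule cont_TP)
  have cQd: "continuous_on S Qd" for S unfolding Qd_def by (rule cont_TPd)
  have par: "\<bar>Qd (-x)\<bar> = \<bar>Qd x\<bar>" for x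
  proof -
    have c: "((Q \<circ> uminus) has_real_derivative Qd (-x) * (-1)) (at x)"
      by (rule DERIV_chain[OF dQ]) (auto intro!: derivative_eq_intros)
    from assms(3) show ?thesis
    proof
      assume ev: "\<forall>t. Q (-t) = Q t"
      then have "Q \<circ> uminus = Q" by auto
      with c have "(Q has_real_derivative Qd (-x) * (-1)) (at x)" by simp
      then have "Qd (-x) * (-1) = Qd x" using DERIV_unique dQ by blast
      then show ?thesis by auto
    next
      assume od: "\<forall>t. Q (-t) = - Q t"
      then have "Q \<circ> uminus = (\<lambda>t. - Q t)" by auto
      with c have "((\<lambda>t. - Q t) has_real_derivative Qd (-x) * (-1)) (at x)" by simp
      moreover have "((\<lambda>t. - Q t) has_real_derivative - Qd x) (at x)" by (rule DERIV_minus[OF dQ])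
      ultimately have "Qd (-x) * (-1) = - Qd x" using DERIV_unique by blast
      then show ?thesis by auto
    qed
  qed
  have parQ: "\<bar>Q (-x)\<bar> = \<bar>Q x\<bar>" for x using assms(3) by auto
  have halfQ: "integral {-pi..pi} (\<lambda>x. \<bar>Q x\<bar>) = 2 * integral {0..pi} (\<lambda>x. \<bar>Q x\<bar>)"
    by (rule even_int) (auto intro!: continuous_intros cQ simp: parQ)
  have halfQd: "integral {-pi..pi} (\<lambda>x. \<bar>Qd x\<bar>) = 2 * integral {0..pi} (\<lambda>x. \<bar>Qd x\<bar>)"
    by (rule even_int) (auto intro!: continuous_intros cQd simp: par)
  have B: "integral {0..pi} (\<lambda>x. \<bar>Qd x\<bar>) \<le> 2 * real \<nu> * integral {0..pi} (\<lambda>x. \<bar>Q x\<bar>)"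
    using bern[of a b \<nu>] halfQ halfQd unfolding Qeq Qd_def by simp
  define t where "t = cheb_angle w n"
  define \<delta> where "\<delta> = pi / cheb_nw w n"
  define g where "g x = integral {0..x} (\<lambda>\<tau>. \<bar>Q \<tau>\<bar>)" for x
  define h where "h x = integral {0..x} (\<lambda>\<tau>. \<bar>Qd \<tau>\<bar>)" for x
  have nwpos: "cheb_nw w n > 0" using assms by (cases w) (auto simp: cheb_nw_def)
  have \<delta>0: "\<delta> \<ge> 0" unfolding \<delta>_def using nwpos by simp
  have each: "\<bar>Q (t k)\<bar> * (t k - t (k - 1)) \<le> (g (t k) - g (t (k - 1))) + \<delta> * (h (t k) - h (t (k - 1)))"
    if k: "k \<in> {1..n}" for k
  proof -
    have af: "0 \<le> t (k-1)" "t (k-1) \<le> t k" "t k - t (k-1) \<le> \<delta>"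
      using angle_facts[OF assms(1), of k w] k unfolding t_def \<delta>_def by auto
    show ?thesis
      using step_bound[OF dQ cQ cQd af] unfolding g_def h_def by (simp add: mult.commute)
  qed
  have "(\<Sum>k=1..n. \<bar>Q (t k)\<bar> * (t k - t (k - 1)))
      \<le> (\<Sum>k=1..n. (g (t k) - g (t (k - 1))) + \<delta> * (h (t k) - h (t (k - 1))))"
    by (rule sum_mono) (rule each)
  also have "\<dots> = (g (t n) - g (t 0)) + \<delta> * (h (t n) - h (t 0))"
  proof -
    have tg: "(\<Sum>k=1..n. g (t k) - g (t (k - 1))) = g (t n) - g (t 0)"
      by (rule tele[where G="\<lambda>k. g (t k)"])
    have th: "(\<Sum>k=1..n. h (t k) - h (t (k - 1))) = h (t n) - h (t 0)"
      by (rule tele[where G="\<lambda>k. h (t k)"])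
    show ?thesis by (simp only: sum.distrib sum_distrib_left[symmetric] tg th)
  qed
  also have "\<dots> = g (t n) + \<delta> * h (t n)"
    by (simp add: t_def cheb_angle_def g_def h_def)
  also have "\<dots> \<le> g pi + \<delta> * h pi"
  proof -
    have tn: "t n \<le> pi" using angle_facts[OF assms(1), of n w] assms(1) unfolding t_def by auto
    have intg: "f integrable_on {x..y}" if "continuous_on UNIV f" for f :: "real \<Rightarrow> real" and x y
      by (rule integrable_continuous_interval, rule continuous_on_subset[OF that]) auto
    have "g (t n) \<le> g pi" unfolding g_def using tn
      by (intro integral_subset_le) (auto intro!: intg continuous_intros cQ)
    moreover have "h (t n) \<le> h pi" unfolding h_def using tn
      by (intro integral_subset_le) (auto intro!: intg continuous_intros cQd)
    ultimately show ?thesis using \<delta>0 by (simp add: add_mono mult_left_mono)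
  qed
  also have "\<dots> \<le> g pi + \<delta> * (2 * real \<nu> * g pi)"
    using B \<delta>0 unfolding g_def h_def by (simp add: mult_left_mono)
  also have "\<dots> = (1 + 2 * pi * real \<nu> / cheb_nw w n) * g pi"
    unfolding \<delta>_def by (simp add: algebra_simps)
  finally show ?thesis unfolding t_def g_def .
qed

end
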